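(* Define, for $m,n\ge1$, $\widetilde G_{m,n}(a)=G_{m,n}(a)+\sum_{j=0}^{m-2}G_{n-1,j+2}(a)\,G_{m-j-1,2}(a)$. Then \[ \sum_{m\ge1}\sum_{n\ge1}\widetilde G_{m,n+1}(a)x^my^n=\frac{-yL(a,-x)+xL(a,-y)}{-L(a,-x)+L(a,-y)}\left(\frac{-yL(a,-x)-xL(a,-y)}{xy}-1\right), \] and consequently $\widetilde G_{m,n}(a)=\widetilde G_{n-1,m+1}(a)$ for all $m\ge1$, $n\ge2$.
   Context: Let $L(a,t)=\sum_{n\ge1}\lambda_n(a)t^n\in\mathbb Q[a][[t]]$ be the compositional inverse (in $t$) of $e^{-at}(e^t-1)$, equivalently the unique such series with $e^{L(a,t)}(1-te^{(a-1)L(a,t)})=1$. The generalized Gregory polynomials $G_{m,n}(a)$ are defined by $\sum_{m,n\ge0}G_{m,n}(a)x^my^n=\dfrac{yL(a,-x)^2-xL(a,-y)^2}{-L(a,-x)+L(a,-y)}$. *)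

theory Defs
  imports "HOL-Computational_Algebra.Formal_Power_Series"
begin

(* The parameter a ranges over an arbitrary field of characteristic 0
   (e.g. rat, or the fraction field of rat poly, where a = the indeterminate). *)

definition gregL :: "'a::field_char_0 \<Rightarrow> 'a fps" where
  "gregL a = fps_inv (fps_exp (- a) * (fps_exp 1 - 1))"

definition fps_neg_arg :: "'a::comm_ring_1 fps \<Rightarrow> 'a fps" where
  "fps_neg_arg f = Abs_fps (\<lambda>n. (-1) ^ n * fps_nth f n)"

(* Bivariate power series in x,y: elements of ('a fps) fps, outer variable y,
   inner variable x. The series sum c(m,n) x^m y^n is bfps c. *)
definition bfps :: "(nat \<Rightarrow> nat \<Rightarrow> 'a::zero) \<Rightarrow> 'a fps fps" where
  "bfps c = Abs_fps (\<lambda>n. Abs_fps (\<lambda>m. c m n))"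

definition bcoeff :: "'a::zero fps fps \<Rightarrow> nat \<Rightarrow> nat \<Rightarrow> 'a" where
  "bcoeff F m n = fps_nth (fps_nth F n) m"

definition bX :: "'a::comm_ring_1 fps fps" where
  "bX = fps_const fps_X"

definition bY :: "'a::comm_ring_1 fps fps" where
  "bY = fps_X"

definition in_x :: "'a::comm_ring_1 fps \<Rightarrow> 'a fps fps" where
  "in_x f = fps_const f"

definition in_y :: "'a::comm_ring_1 fps \<Rightarrow> 'a fps fps" where
  "in_y f = Abs_fps (\<lambda>n. fps_const (fps_nth f n))"

definition bdiv :: "'a::idom fps fps \<Rightarrow> 'a fps fps \<Rightarrow> 'a fps fps" where
  "bdiv N D = (THE H. H * D = N)"

definition Lmx :: "'a::field_char_0 \<Rightarrow> 'a fps fps" where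
  "Lmx a = in_x (fps_neg_arg (gregL a))"

definition Lmy :: "'a::field_char_0 \<Rightarrow> 'a fps fps" where
  "Lmy a = in_y (fps_neg_arg (gregL a))"

definition gregG :: "'a::field_char_0 \<Rightarrow> nat \<Rightarrow> nat \<Rightarrow> 'a" where
  "gregG a m n = bcoeff (bdiv (bY * (Lmx a)^2 - bX * (Lmy a)^2) (- Lmx a + Lmy a)) m n"

(* \<tilde>G_{m,n}(a) for m,n \<ge> 1; the sum j = 0..m-2 is written j < m - 1 *)
definition gregGt :: "'a::field_char_0 \<Rightarrow> nat \<Rightarrow> nat \<Rightarrow> 'a" where
  "gregGt a m n = gregG a m n + (\<Sum>j<m - 1. gregG a (n - 1) (j + 2) * gregG a (m - j - 1) 2)"

end

theory Submission
  imports Defs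
begin


lemma bcoeff_bfps[simp]: "bcoeff (bfps c) m n = c m n"
  by (simp add: bcoeff_def bfps_def)

lemma bcoeff_zero[simp]: "bcoeff 0 m n = 0"
  by (simp add: bcoeff_def)

lemma bcoeff_ext: "(\<And>m n. bcoeff F m n = bcoeff G m n) \<Longrightarrow> F = G"
  unfolding bcoeff_def by (intro fps_ext) auto

lemma bcoeff_add[simp]: "bcoeff (F + G) m n = bcoeff F m n + bcoeff G m n"
  by (simp add: bcoeff_def)
lemma bcoeff_diff[simp]: "bcoeff (F - G) m n = bcoeff F m n - bcoeff (G::'a::ab_group_add fps fps) m n"
  by (simp add: bcoeff_def)
lemma bcoeff_uminus[simp]: "bcoeff (- F) m n = - bcoeff (F::'a::ab_group_add fps fps) m n"
  by (simp add: bcoeff_def)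
lemma bcoeff_one[simp]: "bcoeff (1::'a::comm_ring_1 fps fps) m n = (if m = 0 \<and> n = 0 then 1 else 0)"
  by (simp add: bcoeff_def)

lemma bcoeff_mult: "bcoeff (P * Q :: 'a::comm_ring_1 fps fps) m n =
   (\<Sum>i=0..n. \<Sum>k=0..m. bcoeff P k i * bcoeff Q (m - k) (n - i))"
  by (simp add: bcoeff_def fps_mult_nth fps_sum_nth)

lemma bcoeff_bX_mult[simp]: "bcoeff (bX * P :: 'a::comm_ring_1 fps fps) m n =
   (if m = 0 then 0 else bcoeff P (m - 1) n)"
  by (simp add: bcoeff_def bX_def fps_X_mult_nth)

lemma bcoeff_bY_mult[simp]: "bcoeff (bY * P :: 'a::comm_ring_1 fps fps) m n =
   (if n = 0 then 0 else bcoeff P m (n - 1))"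
  by (simp add: bcoeff_def bY_def fps_X_mult_nth)

lemma bcoeff_in_x[simp]: "bcoeff (in_x f) m n = (if n = 0 then fps_nth f m else 0)"
  by (simp add: bcoeff_def in_x_def)
lemma bcoeff_in_y[simp]: "bcoeff (in_y f) m n = (if m = 0 then fps_nth f n else 0)"
  by (simp add: bcoeff_def in_y_def)

lemma bcoeff_in_x_mult: "bcoeff (in_x c * P :: 'a::comm_ring_1 fps fps) m n =
   (\<Sum>k=0..m. fps_nth c k * bcoeff P (m - k) n)"
  by (simp only: bcoeff_def in_x_def fps_mult_left_const_nth) (simp add: fps_mult_nth)

definition bsw :: "'a::zero fps fps \<Rightarrow> 'a fps fps" where
  "bsw F = bfps (\<lambda>m n. bcoeff F n m)"

lemma bcoeff_bsw[simp]: "bcoeff (bsw F) m n = bcoeff F n m"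
  by (simp add: bsw_def)

lemma bsw_mult: "bsw (P * Q :: 'a::comm_ring_1 fps fps) = bsw P * bsw Q"
proof (rule bcoeff_ext)
  fix m n
  have "bcoeff (bsw (P*Q)) m n = (\<Sum>i=0..m. \<Sum>k=0..n. bcoeff P k i * bcoeff Q (n-k) (m-i))"
    by (simp only: bcoeff_bsw bcoeff_mult)
  also have "\<dots> = (\<Sum>k=0..n. \<Sum>i=0..m. bcoeff P k i * bcoeff Q (n-k) (m-i))"
    by (rule sum.swap)
  also have "\<dots> = bcoeff (bsw P * bsw Q) m n"
    by (simp only: bcoeff_bsw bcoeff_mult)
  finally show "bcoeff (bsw (P*Q)) m n = bcoeff (bsw P * bsw Q) m n" .
qed

lemma bsw_add: "bsw (P + Q :: 'a::comm_ring_1 fps fps) = bsw P + bsw Q"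
  by (rule bcoeff_ext) simp
lemma bsw_diff: "bsw (P - Q :: 'a::comm_ring_1 fps fps) = bsw P - bsw Q"
  by (rule bcoeff_ext) simp
lemma bsw_uminus: "bsw (- Q :: 'a::comm_ring_1 fps fps) = - bsw Q"
  by (rule bcoeff_ext) simp
lemma bsw_one: "bsw (1 :: 'a::comm_ring_1 fps fps) = 1"
  by (rule bcoeff_ext) auto
lemma bsw_bsw: "bsw (bsw Q) = Q"
  by (rule bcoeff_ext) simp
lemma bcoeff_bX: "bcoeff (bX :: 'a::comm_ring_1 fps fps) m n = (if m = 1 \<and> n = 0 then 1 else 0)"
  by (simp add: bcoeff_def bX_def)
lemma bcoeff_bY: "bcoeff (bY :: 'a::comm_ring_1 fps fps) m n = (if m = 0 \<and> n = 1 then 1 else 0)"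
  by (simp add: bcoeff_def bY_def)
lemma bsw_bX: "bsw (bX :: 'a::comm_ring_1 fps fps) = bY"
  by (rule bcoeff_ext) (simp add: bcoeff_bX bcoeff_bY)
lemma bsw_bY: "bsw (bY :: 'a::comm_ring_1 fps fps) = bX"
  by (rule bcoeff_ext) (simp add: bcoeff_bX bcoeff_bY)
lemma bsw_in_x: "bsw (in_x f :: 'a::comm_ring_1 fps fps) = in_y f"
  by (rule bcoeff_ext) simp
lemma bsw_in_y: "bsw (in_y f :: 'a::comm_ring_1 fps fps) = in_x f"
  by (rule bcoeff_ext) simp

lemma in_x_mult: "in_x (f * g) = in_x f * in_x g"
  by (simp add: in_x_def)
lemma in_y_mult: "in_y (f * g :: 'a::comm_ring_1 fps) = in_y f * in_y g"
  by (metis bsw_in_x bsw_mult in_x_mult)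
lemma in_x_X: "in_x fps_X = bX" by (simp add: in_x_def bX_def)
lemma in_y_X: "in_y (fps_X :: 'a::comm_ring_1 fps) = bY"
  by (rule bcoeff_ext) (auto simp add: bcoeff_bY)

definition Qd :: "'a::comm_ring_1 fps \<Rightarrow> 'a fps fps" where
  "Qd h = bfps (\<lambda>m n. fps_nth h (m + n + 1))"

lemma Qd_eq: "(bX - bY) * Qd h = in_x h - in_y h"
proof (rule bcoeff_ext)
  fix m n show "bcoeff ((bX - bY) * Qd h) m n = bcoeff (in_x h - in_y h) m n"
    by (cases m; cases n) (simp_all add: Qd_def left_diff_distrib)
qed

lemma bsw_Qd: "bsw (Qd h) = Qd h"
  by (rule bcoeff_ext) (simp add: Qd_def add.commute)

lemma bdiv_eq: "D \<noteq> 0 \<Longrightarrow> H * D = N \<Longrightarrow> bdiv N D = (H :: 'a::idom fps fps)"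
  unfolding bdiv_def by (rule the_equality) auto



lemma reidx:
  fixes c g :: "nat \<Rightarrow> 'b::comm_ring_1"
  assumes c0: "c 0 = 0"
  shows "(\<Sum>j<M. g (j+2) * c (M - j)) =
         (\<Sum>k=0..M+2. c k * (if 2 \<le> M+2-k then g (M+2-k) else 0))"
proof -
  define F where "F k = c k * (if 2 \<le> M+2-k then g (M+2-k) else 0)" for k
  have "(\<Sum>k=0..M+2. F k) = (\<Sum>k<Suc (Suc (Suc M)). F k)"
    by (simp add: atLeast0AtMost lessThan_Suc_atMost)
  also have "\<dots> = (\<Sum>k<Suc M. F k)"
    by (simp add: F_def)
  also have "\<dots> = (\<Sum>k<Suc M. c k * g (M+2-k))"
    by (rule sum.cong) (auto simp: F_def)
  also have "\<dots> = (\<Sum>i<Suc M. c (Suc M - Suc i) * g (M+2-(Suc M - Suc i)))"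
    by (rule sum.nat_diff_reindex[symmetric])
  also have "\<dots> = (\<Sum>i<Suc M. c (M - i) * g (i+2))"
    by (rule sum.cong) auto
  also have "\<dots> = (\<Sum>j<M. g (j+2) * c (M - j))"
    by (simp add: c0 mult.commute)
  finally show ?thesis by (simp add: F_def)
qed

lemma alg:
  fixes x y u v G g2 T1 T2 A B D :: "'b::idom"
  assumes "D = -u+v" "G*D = y*u^2 - x*v^2" "y*T1 = G + y*u" "x*T2 = g2*(G+x*v)" "g2*u = u+x"
    "A*D = -y*u+x*v" "B*(x*y) = -y*u-x*v"
  shows "x*y*u*D*(T1+T2) = x*y*u*D*(A*(B-1))"
  using assms by algebra

lemma gregL0: "fps_nth (gregL a) 0 = 0"
  by (simp add: gregL_def fps_inv_def)

lemma gregL1: "fps_nth (gregL (a::'a::field_char_0)) 1 = 1"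
proof -
  define g :: "'a fps" where "g = fps_exp (- a) * (fps_exp 1 - 1)"
  have g1: "fps_nth g 1 = 1" by (simp add: g_def fps_mult_nth)
  have "fps_nth (gregL a) 1 = compinv g (Suc 0)" by (simp add: gregL_def g_def fps_inv_def)
  also have "\<dots> = 1" using g1 by simp
  finally show ?thesis .
qed

locale gl = fixes a :: "'a::field_char_0"
begin

definition "ff = fps_neg_arg (gregL a)"
definition "fx = Abs_fps (\<lambda>n. fps_nth ff (n + 1))"

lemma ff0: "fps_nth ff 0 = 0" by (simp add: ff_def fps_neg_arg_def gregL0)
lemma ff1': "fps_nth ff (Suc 0) = -1"
proof -
  have "fps_nth ff (Suc 0) = - fps_nth (gregL a) 1" by (simp add: ff_def fps_neg_arg_def)
  also have "\<dots> = -1" using gregL1[of a] by (simp only:)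
  finally show ?thesis .
qed
lemma ff1: "fps_nth ff 1 = -1" unfolding One_nat_def by (rule ff1')
lemma fx0: "fps_nth fx 0 = -1" by (simp add: fx_def ff1')
lemma ff_fx: "ff = fps_X * fx"
  by (rule fps_ext) (auto simp: fx_def ff0 fps_X_mult_nth)

lemma u_def: "Lmx a = in_x ff" by (simp add: Lmx_def ff_def)
lemma v_def: "Lmy a = in_y ff" by (simp add: Lmy_def ff_def)
lemma u_U: "Lmx a = bX * in_x fx" by (simp add: u_def ff_fx in_x_mult in_x_X)
lemma v_V: "Lmy a = bY * in_y fx" by (simp add: v_def ff_fx in_y_mult in_y_X)

definition "Qi = fps_right_inverse (Qd ff) (inverse fx)"

lemma Qf_Qi: "Qd ff * Qi = 1"
proof -
  have "fps_nth (Qd ff) 0 = fx" by (simp add: Qd_def bfps_def fx_def)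
  moreover have "fx * inverse fx = 1" by (rule inverse_mult_eq_1') (simp add: fx0)
  ultimately show ?thesis unfolding Qi_def by (intro fps_right_inverse) simp
qed

lemma D_eq: "- Lmx a + Lmy a = - ((bX - bY) * Qd ff)"
  by (simp add: Qd_eq u_def v_def)

lemma bXbY_nz: "(bX - bY :: 'a fps fps) \<noteq> 0"
proof
  assume "(bX - bY :: 'a fps fps) = 0"
  hence "bcoeff (bX - bY :: 'a fps fps) 1 0 = 0" by simp
  thus False by (simp add: bcoeff_bX bcoeff_bY)
qed

lemma bX_nz: "(bX :: 'a fps fps) \<noteq> 0"
proof
  assume "(bX :: 'a fps fps) = 0"
  hence "bcoeff (bX :: 'a fps fps) 1 0 = 0" by simp
  thus False by (simp add: bcoeff_bX)
qed

lemma bY_nz: "(bY :: 'a fps fps) \<noteq> 0"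
proof
  assume "(bY :: 'a fps fps) = 0"
  hence "bcoeff (bY :: 'a fps fps) 0 1 = 0" by simp
  thus False by (simp add: bcoeff_bY)
qed

lemma u_nz: "Lmx a \<noteq> 0"
proof
  assume "Lmx a = 0"
  hence "bcoeff (Lmx a) 1 0 = 0" by simp
  thus False by (simp add: u_def ff1')
qed

lemma D_nz: "- Lmx a + Lmy a \<noteq> 0"
proof -
  have "Qd ff \<noteq> (0 :: 'a fps fps)" using Qf_Qi by auto
  thus ?thesis unfolding D_eq using bXbY_nz by simp
qed

lemma G_exists: "(- (bX * bY * Qd (fps_X * fx^2) * Qi)) * (- Lmx a + Lmy a) =
   bY * (Lmx a)^2 - bX * (Lmy a)^2"
proof -
  have e1: "(bX - bY) * Qd (fps_X * fx^2) = bX * (in_x fx)^2 - bY * (in_y fx)^2"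
    by (simp add: Qd_eq in_x_mult in_y_mult in_x_X in_y_X power2_eq_square)
  show ?thesis using D_eq u_U v_V e1 Qf_Qi by algebra
qed

lemma A_exists: "(bX * bY * Qd fx * Qi) * (- Lmx a + Lmy a) = - bY * Lmx a + bX * Lmy a"
proof -
  have e1: "(bX - bY) * Qd fx = in_x fx - in_y fx"
    by (simp add: Qd_eq)
  show ?thesis unfolding D_eq using e1 Qf_Qi u_U v_V by algebra
qed

lemma B_exists: "(- in_x fx - in_y fx) * (bX * bY) = - bY * Lmx a - bX * Lmy a"
  unfolding u_U v_V by algebra

definition "DD = - Lmx a + Lmy a"
definition "NN = bY * (Lmx a)^2 - bX * (Lmy a)^2"
definition "Gg = bdiv NN DD"

lemma Gg_eq: "Gg = - (bX * bY * Qd (fps_X * fx^2) * Qi)"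
  unfolding Gg_def NN_def DD_def by (rule bdiv_eq[OF D_nz G_exists])

lemma GD: "Gg * DD = NN"
  unfolding Gg_eq DD_def NN_def by (rule G_exists)

lemma bsw_u: "bsw (Lmx a) = Lmy a" by (simp add: u_def v_def bsw_in_x)
lemma bsw_v: "bsw (Lmy a) = Lmx a" by (simp add: u_def v_def bsw_in_y)

lemma Gsym: "bsw Gg = Gg"
proof -
  have bD: "bsw DD = - DD" by (simp add: DD_def bsw_add bsw_diff bsw_uminus bsw_u bsw_v)
  have bN: "bsw NN = - NN"
    by (simp add: NN_def bsw_diff bsw_mult bsw_bX bsw_bY bsw_u bsw_v power2_eq_square)
  have "bsw (Gg * DD) = bsw NN" by (simp only: GD)
  hence "bsw Gg * (- DD) = - NN" by (simp only: bsw_mult bD bN)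
  hence "bsw Gg * DD = NN" by simp
  hence "bdiv NN DD = bsw Gg" by (rule bdiv_eq[OF D_nz[folded DD_def]])
  thus ?thesis unfolding Gg_def[symmetric] by (rule sym)
qed

lemma ff_nz: "ff \<noteq> 0"
  using ff1' by auto

lemma ff2_nth: "fps_nth (ff^2) 0 = 0" "fps_nth (ff^2) (Suc 0) = 0" "fps_nth (ff^2) 2 = 1"
proof -
  have e: "ff^2 = fps_X^2 * fx^2" by (simp add: ff_fx power_mult_distrib)
  have f0: "fps_nth (fx^2) 0 = 1" by (simp add: power2_eq_square fx0)
  show "fps_nth (ff^2) 0 = 0" "fps_nth (ff^2) (Suc 0) = 0" "fps_nth (ff^2) 2 = 1"
    unfolding e by (simp_all add: fps_X_power_mult_nth f0)
qed

lemma fps_m1: "fps_const (-1::'a) = -1"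
  by (metis fps_const_1_eq_1 fps_const_neg)

lemma DD_nth: "fps_nth DD 0 = - ff" "fps_nth DD (Suc 0) = - 1"
  by (simp_all add: DD_def u_def v_def in_x_def in_y_def ff0 ff1' fps_m1)

lemma NN_nth: "fps_nth NN 0 = 0" "fps_nth NN (Suc 0) = ff^2" "fps_nth NN 2 = - fps_X"
proof -
  have e: "NN = bY * in_x (ff^2) - fps_const fps_X * in_y (ff^2)"
    by (simp add: NN_def u_def v_def in_x_mult in_y_mult power2_eq_square bX_def)
  show "fps_nth NN 0 = 0" "fps_nth NN (Suc 0) = ff^2" "fps_nth NN 2 = - fps_X"
    unfolding e using ff2_nth by (simp_all add: bY_def in_x_def in_y_def numeral_2_eq_2)
qed

lemma Gg_nth0: "fps_nth Gg 0 = 0"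
proof -
  have "fps_nth (Gg * DD) 0 = 0" by (simp add: GD NN_nth)
  hence "fps_nth Gg 0 * (- ff) = 0" by (simp add: DD_nth)
  thus ?thesis using ff_nz by simp
qed

lemma Gg_nth1: "fps_nth Gg (Suc 0) = - ff"
proof -
  have "fps_nth (Gg * DD) (Suc 0) = ff^2" by (simp add: GD NN_nth)
  hence "fps_nth Gg (Suc 0) * (- ff) = ff * ff"
    by (simp add: fps_mult_nth DD_nth Gg_nth0 power2_eq_square)
  hence "(- fps_nth Gg (Suc 0)) * ff = ff * ff" by simp
  thus ?thesis using ff_nz by (metis mult_right_cancel minus_equation_iff)
qed

lemma Gg_nth2: "fps_nth Gg 2 * ff = ff + fps_X"
proof -
  have "fps_nth (Gg * DD) 2 = - fps_X" by (simp add: GD NN_nth)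
  hence "fps_nth Gg (Suc 0) * (-1) + fps_nth Gg 2 * (- ff) = - fps_X"
    by (simp add: fps_mult_nth DD_nth Gg_nth0 numeral_2_eq_2)
  thus ?thesis by (simp add: Gg_nth1 algebra_simps)
qed

lemma Gc0: "bcoeff Gg m 0 = 0" by (simp add: bcoeff_def Gg_nth0)
lemma Gc1: "bcoeff Gg m (Suc 0) = - fps_nth ff m" by (simp add: bcoeff_def Gg_nth1)
lemma Gcsym: "bcoeff Gg m n = bcoeff Gg n m"
  using bcoeff_bsw[of Gg m n] unfolding Gsym .
lemma Gc0n: "bcoeff Gg 0 n = 0" by (subst Gcsym) (rule Gc0)
lemma Gc1n: "bcoeff Gg (Suc 0) n = - fps_nth ff n" by (subst Gcsym) (rule Gc1)

end

context gl begin
definition "T1 = bfps (\<lambda>m n. if 1 \<le> m \<and> 1 \<le> n then bcoeff Gg m (n+1) else 0)"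
definition "T2 = bfps (\<lambda>m n. if 1 \<le> m \<and> 1 \<le> n then
   (\<Sum>j<m-1. bcoeff Gg n (j+2) * bcoeff Gg (m-j-1) 2) else 0)"

lemma T1_eq: "bY * T1 = Gg + bY * Lmx a"
proof (rule bcoeff_ext)
  fix m n show "bcoeff (bY * T1) m n = bcoeff (Gg + bY * Lmx a) m n"
  proof (cases n)
    case 0 thus ?thesis by (simp add: Gc0)
  next
    case (Suc k) thus ?thesis
      by (cases k; cases m) (simp_all add: T1_def Gc1 Gc0n u_def)
  qed
qed

lemma Zc: "bcoeff (Gg + bX * Lmy a) i n = (if 2 \<le> i then bcoeff Gg i n else 0)"
proof (cases i)
  case 0 thus ?thesis by (simp add: Gc0n)
next
  case (Suc k) thus ?thesis
    by (cases k) (simp_all add: Gc1n v_def)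
qed

lemma T2_eq: "bX * T2 = in_x (fps_nth Gg 2) * (Gg + bX * Lmy a)"
proof (rule bcoeff_ext)
  fix m n
  have r: "bcoeff (in_x (fps_nth Gg 2) * (Gg + bX * Lmy a)) m n =
     (\<Sum>k=0..m. bcoeff Gg k 2 * (if 2 \<le> m - k then bcoeff Gg (m-k) n else 0))"
    unfolding bcoeff_in_x_mult Zc by (rule sum.cong) (simp_all add: bcoeff_def)
  show "bcoeff (bX * T2) m n = bcoeff (in_x (fps_nth Gg 2) * (Gg + bX * Lmy a)) m n"
  proof (cases "m \<ge> 2 \<and> n \<ge> 1")
    case True
    then obtain M where M: "m = M + 2" by (metis add.commute le_Suc_ex)
    have "bcoeff (bX * T2) m n = (\<Sum>j<M. bcoeff Gg n (j+2) * bcoeff Gg (M - j) 2)"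
      using True M by (simp add: T2_def)
    also have "\<dots> = (\<Sum>j<M. bcoeff Gg (j+2) n * bcoeff Gg (M - j) 2)"
      by (intro sum.cong refl arg_cong2[where f="(*)"] Gcsym)
    also have "\<dots> = (\<Sum>k=0..M+2. bcoeff Gg k 2 * (if 2 \<le> M+2-k then bcoeff Gg (M+2-k) n else 0))"
      by (rule reidx) (simp add: Gc0n)
    also have "\<dots> = bcoeff (in_x (fps_nth Gg 2) * (Gg + bX * Lmy a)) m n"
      using r unfolding M by simp
    finally show ?thesis .
  next
    case False
    hence "bcoeff (bX * T2) m n = 0" by (auto simp: T2_def)
    moreover have "bcoeff (in_x (fps_nth Gg 2) * (Gg + bX * Lmy a)) m n = 0"
      unfolding r using False by (intro sum.neutral) (cases n; auto simp: Gc0)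
    ultimately show ?thesis by simp
  qed
qed

lemma gG: "gregG a m n = bcoeff Gg m n"
  by (simp add: gregG_def Gg_def NN_def DD_def)

definition "AA = bdiv (- bY * Lmx a + bX * Lmy a) (- Lmx a + Lmy a)"
definition "BB = bdiv (- bY * Lmx a - bX * Lmy a) (bX * bY)"

lemma AA_eq: "AA = bX * bY * Qd fx * Qi"
  unfolding AA_def by (rule bdiv_eq[OF D_nz A_exists])

lemma BB_eq: "BB = - in_x fx - in_y fx"
proof -
  have "(bX * bY :: 'a fps fps) \<noteq> 0" using bX_nz bY_nz by simp
  thus ?thesis unfolding BB_def by (rule bdiv_eq[OF _ B_exists])
qed

lemma LHS_eq: "bfps (\<lambda>m n. if 1 \<le> m \<and> 1 \<le> n then gregGt a m (n + 1) else 0) = T1 + T2"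
  by (rule bcoeff_ext) (simp add: gregGt_def gG T1_def T2_def)

lemma g2_eq: "in_x (fps_nth Gg 2) * Lmx a = Lmx a + bX"
proof -
  have "in_x (fps_nth Gg 2) * Lmx a = in_x (fps_nth Gg 2 * ff)" by (simp add: u_def in_x_mult)
  also have "\<dots> = in_x (ff + fps_X)" by (simp only: Gg_nth2)
  also have "\<dots> = Lmx a + bX" by (simp add: u_def in_x_def bX_def)
  finally show ?thesis .
qed

lemma main_id: "T1 + T2 = AA * (BB - 1)"
proof -
  have AD: "AA * DD = - bY * Lmx a + bX * Lmy a"
    unfolding AA_eq DD_def by (rule A_exists)
  have BD: "BB * (bX * bY) = - bY * Lmx a - bX * Lmy a"
    unfolding BB_eq by (rule B_exists)
  have GD': "Gg * DD = bY * (Lmx a)^2 - bX * (Lmy a)^2" using GD by (simp add: NN_def)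
  have e: "bX * bY * Lmx a * DD * (T1 + T2) = bX * bY * Lmx a * DD * (AA * (BB - 1))"
    by (rule alg[OF DD_def GD' T1_eq T2_eq g2_eq AD BD])
  have nz: "bX * bY * Lmx a * DD \<noteq> 0"
    using bX_nz bY_nz u_nz D_nz by (simp add: DD_def)
  show ?thesis using e nz by simp
qed

lemma bsw_DD: "bsw DD = - DD"
  by (simp add: DD_def bsw_add bsw_diff bsw_uminus bsw_u bsw_v)

lemma bsw_AA: "bsw AA = AA"
proof -
  have AD: "AA * DD = - bY * Lmx a + bX * Lmy a"
    unfolding AA_eq DD_def by (rule A_exists)
  have bN: "bsw (- bY * Lmx a + bX * Lmy a) = - (- bY * Lmx a + bX * Lmy a)"
  proof -
    have "bsw (- bY * Lmx a + bX * Lmy a) = - bsw bY * bsw (Lmx a) + bsw bX * bsw (Lmy a)"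
      by (simp only: bsw_add bsw_mult bsw_uminus)
    also have "\<dots> = - bX * Lmy a + bY * Lmx a" by (simp only: bsw_bX bsw_bY bsw_u bsw_v)
    also have "\<dots> = - (- bY * Lmx a + bX * Lmy a)" by algebra
    finally show ?thesis .
  qed
  have "bsw (AA * DD) = bsw (- bY * Lmx a + bX * Lmy a)" by (simp only: AD)
  hence "bsw AA * (- DD) = - (- bY * Lmx a + bX * Lmy a)" by (simp only: bsw_mult bsw_DD bN)
  hence "bsw AA * DD = - bY * Lmx a + bX * Lmy a" by algebra
  hence "bdiv (- bY * Lmx a + bX * Lmy a) DD = bsw AA" by (rule bdiv_eq[OF D_nz[folded DD_def]])
  thus ?thesis unfolding DD_def AA_def[symmetric] by (rule sym)
qed

lemma bsw_BB: "bsw BB = BB"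
  by (simp add: BB_eq bsw_diff bsw_uminus bsw_in_x bsw_in_y)

lemma main: "bfps (\<lambda>m n. if 1 \<le> m \<and> 1 \<le> n then gregGt a m (n + 1) else 0) =
           bdiv (- bY * Lmx a + bX * Lmy a) (- Lmx a + Lmy a) *
           (bdiv (- bY * Lmx a - bX * Lmy a) (bX * bY) - 1)"
  using LHS_eq main_id by (simp add: AA_def BB_def)

lemma symm:
  assumes "1 \<le> m" "2 \<le> n"
  shows "gregGt a m n = gregGt a (n - 1) (m + 1)"
proof -
  define c where "c m n = (if 1 \<le> m \<and> 1 \<le> n then gregGt a m (n + 1) else 0)" for m n
  have ce: "c = (\<lambda>m n. if 1 \<le> m \<and> 1 \<le> n then gregGt a m (n + 1) else 0)"
    by (intro ext) (simp add: c_def)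
  have L: "bfps c = AA * (BB - 1)" unfolding ce using LHS_eq main_id by (simp only:)
  have S: "bsw (AA * (BB - 1)) = AA * (BB - 1)"
    by (simp add: bsw_mult bsw_diff bsw_one bsw_AA bsw_BB)
  have "gregGt a m n = c m (n - 1)" using assms by (simp add: c_def)
  also have "\<dots> = bcoeff (AA * (BB - 1)) m (n - 1)" by (simp add: L[symmetric])
  also have "\<dots> = bcoeff (AA * (BB - 1)) (n - 1) m"
    by (metis S bcoeff_bsw)
  also have "\<dots> = c (n - 1) m" by (simp add: L[symmetric])
  also have "\<dots> = gregGt a (n - 1) (m + 1)" using assms by (simp add: c_def)
  finally show ?thesis .
qed

end

theorem lemma6p6:
  fixes a :: "'a::field_char_0"
  shows "bfps (\<lambda>m n. if 1 \<le> m \<and> 1 \<le> n then gregGt a m (n + 1) else 0) =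
           bdiv (- bY * Lmx a + bX * Lmy a) (- Lmx a + Lmy a) *
           (bdiv (- bY * Lmx a - bX * Lmy a) (bX * bY) - 1)
       \<and> (\<forall>m n. 1 \<le> m \<longrightarrow> 2 \<le> n \<longrightarrow> gregGt a m n = gregGt a (n - 1) (m + 1))"
  using gl.main[of a] gl.symm[of _ _ a] by blast

end
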